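(* Let $H$, $L$ be as in the context and let $(S,\mathcal T_0)$ be any feasible solution. Then $d(S,\mathcal T_0)\le d_{UB}:=\lfloor L/\omega(H)\rfloor$.
   Context: Notation: $[n)=\{0,1,\dots,n-1\}$. Let $M,N,Z$ be positive integers and let $H$ be a binary $MZ\times NZ$ matrix made of $M\times N$ blocks, each a $Z\times Z$ circulant; assume $H$ has no zero row and no two identical rows. For $\mathcal A\subseteq[MZ)$, $H_{\mathcal A}$ is the submatrix of rows indexed by $\mathcal A$ (in increasing order); $\omega(A)$ is the maximum Hamming weight of a column of $A$ (with $\omega$ of the empty matrix equal to $0$). For $i\in[MZ)$ and integer $s$, $\pi^s(i)=Z\lfloor i/Z\rfloor+((i+s)\bmod Z)$ and $\pi^s(\mathcal T)=\{\pi^s(x):x\in\mathcal T\}$. Fix an integer $L>1$. A pair $(S,\mathcal T_0)$ ($S$ a positive integer, $\mathcal T_0\subseteq[MZ)$) is a feasible solution if, with $\mathcal T_l=\pi^{lS}(\mathcal T_0)$ for $l\in[L)$, the sets $\mathcal T_0,\dots,\mathcal T_{L-1}$ are pairwise disjoint with union $[MZ)$. The layer distance $d(S,\mathcal T_0)$ is the largest $l\in[L)$ such that the matrix obtained by stacking $H_{\mathcal T_0},\dots,H_{\mathcal T_{l-1}}$ vertically has maximum column weight at most $1$ (for $l=0$ the stack is empty). *)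

theory Defs
  imports Main
begin

text \<open>A binary MZ x NZ matrix is modelled as H :: nat => nat => bool,
  entry (i,j) meaningful for i < M*Z, j < N*Z (True = 1).\<close>

definition pi_shift :: "nat \<Rightarrow> int \<Rightarrow> nat \<Rightarrow> nat" where
  "pi_shift Z s i = Z * (i div Z) + nat ((int i + s) mod int Z)"

text \<open>H consists of M x N blocks, each a Z x Z circulant:
  entry (r,c) of a block equals entry ((r+1) mod Z, (c+1) mod Z).\<close>
definition block_circulant :: "nat \<Rightarrow> nat \<Rightarrow> nat \<Rightarrow> (nat \<Rightarrow> nat \<Rightarrow> bool) \<Rightarrow> bool" where
  "block_circulant M N Z H \<longleftrightarrow>
     (\<forall>i < M * Z. \<forall>j < N * Z. H (pi_shift Z 1 i) (pi_shift Z 1 j) = H i j)"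

definition no_zero_row :: "nat \<Rightarrow> nat \<Rightarrow> nat \<Rightarrow> (nat \<Rightarrow> nat \<Rightarrow> bool) \<Rightarrow> bool" where
  "no_zero_row M N Z H \<longleftrightarrow> (\<forall>i < M * Z. \<exists>j < N * Z. H i j)"

definition distinct_rows :: "nat \<Rightarrow> nat \<Rightarrow> nat \<Rightarrow> (nat \<Rightarrow> nat \<Rightarrow> bool) \<Rightarrow> bool" where
  "distinct_rows M N Z H \<longleftrightarrow>
     (\<forall>i < M * Z. \<forall>i' < M * Z. i \<noteq> i' \<longrightarrow> (\<exists>j < N * Z. H i j \<noteq> H i' j))"

definition omega :: "nat \<Rightarrow> nat \<Rightarrow> (nat \<Rightarrow> nat \<Rightarrow> bool) \<Rightarrow> nat set \<Rightarrow> nat" where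
  "omega N Z H A = Max ({0} \<union> {card {i \<in> A. H i j} | j. j < N * Z})"

definition layer :: "nat \<Rightarrow> nat \<Rightarrow> nat set \<Rightarrow> nat \<Rightarrow> nat set" where
  "layer Z S T0 l = pi_shift Z (int (l * S)) ` T0"

definition feasible :: "nat \<Rightarrow> nat \<Rightarrow> nat \<Rightarrow> nat \<Rightarrow> nat set \<Rightarrow> bool" where
  "feasible M Z L S T0 \<longleftrightarrow> S > 0 \<and> T0 \<subseteq> {..< M * Z} \<and>
     (\<forall>l < L. \<forall>l' < L. l \<noteq> l' \<longrightarrow> layer Z S T0 l \<inter> layer Z S T0 l' = {}) \<and>
     (\<Union>l < L. layer Z S T0 l) = {..< M * Z}"

text \<open>Maximum column weight of the vertical stack H_{T_0}; ...; H_{T_{l-1}}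
  (column weight of a stack = sum of the column weights of its pieces).\<close>
definition stack_weight :: "nat \<Rightarrow> nat \<Rightarrow> (nat \<Rightarrow> nat \<Rightarrow> bool) \<Rightarrow> nat \<Rightarrow> nat set \<Rightarrow> nat \<Rightarrow> nat" where
  "stack_weight N Z H S T0 l =
     Max ({0} \<union> {(\<Sum>k < l. card {i \<in> layer Z S T0 k. H i j}) | j. j < N * Z})"

definition layer_distance :: "nat \<Rightarrow> nat \<Rightarrow> nat \<Rightarrow> (nat \<Rightarrow> nat \<Rightarrow> bool) \<Rightarrow> nat \<Rightarrow> nat set \<Rightarrow> nat" where
  "layer_distance N Z L H S T0 = (GREATEST l. l < L \<and> stack_weight N Z H S T0 l \<le> 1)"

end

theory Submission imports Defs begin

lemma ps_comp: assumes "Z > 0" shows "pi_shift Z a (pi_shift Z b i) = pi_shift Z (a+b) i"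
proof -
  define r where "r = nat ((int i + b) mod int Z)"
  have r: "r < Z" "int r = (int i + b) mod int Z" using assms unfolding r_def
    by (auto simp: nat_less_iff)
  have d: "(Z * (i div Z) + r) div Z = i div Z" using r assms by simp
  have m0: "(Z * (i div Z) + r) mod Z = r" using r by simp
  have m: "int (Z * (i div Z) + r) mod int Z = int r" using m0 by (metis of_nat_mod)
  have "(int (Z * (i div Z) + r) + a) mod int Z = (int (Z * (i div Z) + r) mod int Z + a) mod int Z"
    by (rule mod_add_left_eq[symmetric])
  also have "\<dots> = ((int i + b) mod int Z + a) mod int Z" using m r by simp
  also have "\<dots> = (int i + b + a) mod int Z" by (rule mod_add_left_eq)
  also have "\<dots> = (int i + (a + b)) mod int Z" by (simp add: algebra_simps)
  finally have "(int (Z * (i div Z) + r) + a) mod int Z = (int i + (a + b)) mod int Z" .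
  then show ?thesis unfolding pi_shift_def r_def[symmetric] using d by simp
qed

lemma ps_zero: "pi_shift Z 0 i = i"
  unfolding pi_shift_def by (simp add: of_nat_mod[symmetric])

lemma ps_lt: assumes "i < n * Z" shows "pi_shift Z s i < n * Z"
proof -
  have Z: "Z > 0" using assms by (cases Z) auto
  have "nat ((int i + s) mod int Z) < Z" using Z by (simp add: nat_less_iff)
  moreover have "i div Z < n" using assms Z by (simp add: div_less_iff_less_mult)
  hence "Z * (i div Z) + Z \<le> n * Z" by (metis Suc_leI mult.commute mult_Suc_right mult_le_mono1 add.commute)
  ultimately show ?thesis unfolding pi_shift_def by linarith
qed

lemma ps_inv: assumes "Z > 0" shows "pi_shift Z (-s) (pi_shift Z s i) = i"
  using ps_comp[OF assms] ps_zero by simp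

lemma ps_inj: assumes "Z > 0" shows "inj (pi_shift Z s)"
  by (metis ps_inv[OF assms] injI)

lemma ps_mod: "pi_shift Z s = pi_shift Z (s mod int Z)"
  unfolding pi_shift_def by (auto simp: fun_eq_iff mod_add_right_eq)

lemma circ_nat:
  assumes Z: "Z > 0" and bc: "block_circulant M N Z H" and i: "i < M * Z" and j: "j < N * Z"
  shows "H (pi_shift Z (int n) i) (pi_shift Z (int n) j) = H i j"
proof (induction n)
  case 0 then show ?case by (simp add: ps_zero)
next
  case (Suc n)
  have e: "pi_shift Z (int (Suc n)) x = pi_shift Z 1 (pi_shift Z (int n) x)" for x
    using ps_comp[OF Z, of 1 "int n" x] by (simp add: add.commute)
  show ?case unfolding e using bc Suc ps_lt[OF i] ps_lt[OF j] unfolding block_circulant_def by auto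
qed

lemma circ_int:
  assumes Z: "Z > 0" and bc: "block_circulant M N Z H" and i: "i < M * Z" and j: "j < N * Z"
  shows "H (pi_shift Z s i) (pi_shift Z s j) = H i j"
proof -
  have "s mod int Z = int (nat (s mod int Z))" using Z by simp
  then show ?thesis using circ_nat[OF Z bc i j, of "nat (s mod int Z)"] ps_mod[of Z s] by metis
qed

lemma layer_add: assumes Z: "Z > 0"
  shows "layer Z S T0 (a + b) = pi_shift Z (int (a * S)) ` layer Z S T0 b"
  unfolding layer_def image_image ps_comp[OF Z] by (simp add: algebra_simps)

lemma periodic_sum:
  fixes g :: "nat \<Rightarrow> nat"
  assumes per: "\<And>l. g (l + L) = g l"
  shows "(\<Sum>l<L. g (k + l)) = (\<Sum>l<L. g l)"
proof (induction k)
  case 0 then show ?case by simp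
next
  case (Suc k)
  have a: "(\<Sum>l<Suc n. g (k + l)) = g k + (\<Sum>l<n. g (Suc k + l))" for n
    by (subst sum.lessThan_Suc_shift) simp
  have b: "(\<Sum>l<Suc n. g (k + l)) = (\<Sum>l<n. g (k + l)) + g (k + n)" for n
    by simp
  have c: "(\<Sum>l<Suc n. g (Suc k + l)) = (\<Sum>l<n. g (Suc k + l)) + g (Suc k + n)" for n
    by simp
  show ?case
  proof (cases L)
    case 0 then show ?thesis by simp
  next
    case (Suc n)
    have "g (Suc k + n) = g k" using per[of k] Suc by (simp add: add.commute)
    then show ?thesis using a[of n] c[of n] Suc.IH Suc by simp
  qed
qed

lemma ps_image_U: assumes Z: "Z > 0" shows "pi_shift Z s ` {..<n * Z} = {..<n * Z}"
proof (rule endo_inj_surj)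
  show "finite {..<n * Z}" by simp
  show "pi_shift Z s ` {..<n * Z} \<subseteq> {..<n * Z}"
    by (rule image_subsetI) (simp add: ps_lt)
  show "inj_on (pi_shift Z s) {..<n * Z}"
    using ps_inj[OF Z, of s] by (rule inj_on_subset) simp
qed

lemma layer_sub: assumes "T0 \<subseteq> {..<M * Z}" shows "layer Z S T0 l \<subseteq> {..<M * Z}"
  unfolding layer_def
proof (rule image_subsetI)
  fix x assume "x \<in> T0"
  then have "x < M * Z" using assms by auto
  then show "pi_shift Z (int (l * S)) x \<in> {..<M * Z}" by (simp add: ps_lt)
qed

lemma layer_period:
  assumes Z: "Z > 0" and L: "L > 0" and fe: "feasible M Z L S T0"
  shows "layer Z S T0 (l + L) = layer Z S T0 l"
proof -
  let ?T = "layer Z S T0" and ?s = "pi_shift Z (int S)"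
  let ?U = "{..<M * Z}"
  have dis: "\<And>l l'. l < L \<Longrightarrow> l' < L \<Longrightarrow> l \<noteq> l' \<Longrightarrow> ?T l \<inter> ?T l' = {}"
    and cov: "(\<Union>l<L. ?T l) = ?U" and T0: "T0 \<subseteq> ?U"
    using fe unfolding feasible_def by auto
  have suc: "?T (Suc l) = ?s ` ?T l" for l using layer_add[OF Z, of S T0 1 l] by simp
  have inj: "inj ?s" by (rule ps_inj[OF Z])
  have cov2: "(\<Union>l<L. ?T (Suc l)) = ?U"
    using cov ps_image_U[OF Z, of "int S" M] unfolding suc image_UN[symmetric] by simp
  have LL: "?T L = ?s ` ?T (L - 1)" using suc[of "L - 1"] L by simp
  have "?T L = ?T 0"
  proof
    show "?T L \<subseteq> ?T 0"
    proof
      fix x assume x: "x \<in> ?T L"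
      have "x \<in> ?U" using layer_sub[OF T0] x by blast
      then obtain l where l: "l < L" "x \<in> ?T l" using cov by blast
      show "x \<in> ?T 0"
      proof (cases l)
        case 0 then show ?thesis using l by simp
      next
        case (Suc m)
        have "?T L \<inter> ?T l = ?s ` (?T (L - 1) \<inter> ?T m)"
          using LL suc[of m] Suc image_Int[OF inj] by simp
        also have "\<dots> = {}" using dis[of "L - 1" m] Suc l L by auto
        finally show ?thesis using x l by blast
      qed
    qed
  next
    show "?T 0 \<subseteq> ?T L"
    proof
      fix x assume x: "x \<in> ?T 0"
      have "x \<in> ?U" using layer_sub[OF T0] x by blast
      then obtain l where l: "l < L" "x \<in> ?T (Suc l)" using cov2 by blast
      have "Suc l = L"
      proof (rule ccontr)
        assume "Suc l \<noteq> L"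
        then have "?T (Suc l) \<inter> ?T 0 = {}" using dis[of "Suc l" 0] l by auto
        then show False using x l by blast
      qed
      then show "x \<in> ?T L" using l by simp
    qed
  qed
  then show ?thesis using layer_add[OF Z, of S T0 l L] layer_add[OF Z, of S T0 l 0] by simp
qed

lemma img_filter: "{x \<in> f ` A. P x} = f ` {x \<in> A. P (f x)}" by blast

lemma filter_cong2: "(\<And>x. x \<in> A \<Longrightarrow> P x = Q x) \<Longrightarrow> {x \<in> A. P x} = {x \<in> A. Q x}" by auto

theorem theorem6:
  fixes M N Z L S :: nat and H :: "nat \<Rightarrow> nat \<Rightarrow> bool" and T0 :: "nat set"
  assumes "M > 0" and "N > 0" and "Z > 0" and "L > 1"
    and "block_circulant M N Z H"
    and "no_zero_row M N Z H"
    and "distinct_rows M N Z H"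
    and "feasible M Z L S T0"
  shows "layer_distance N Z L H S T0 \<le> L div omega N Z H {..< M * Z}"
proof -
  note Z = \<open>Z > 0\<close> and bc = \<open>block_circulant M N Z H\<close> and fe = \<open>feasible M Z L S T0\<close>
  have L: "L > 0" using \<open>L > 1\<close> by simp
  let ?T = "layer Z S T0" and ?U = "{..<M * Z}"
  have dis: "\<And>l l'. l < L \<Longrightarrow> l' < L \<Longrightarrow> l \<noteq> l' \<Longrightarrow> ?T l \<inter> ?T l' = {}"
    and cov: "(\<Union>l<L. ?T l) = ?U" and T0: "T0 \<subseteq> ?U"
    using fe unfolding feasible_def by auto
  define f where "f l j = card {i \<in> ?T l. H i j}" for l j
  define ms where "ms l = pi_shift Z (- int (l * S))" for l
  have shift: "f (k + l) j = f k (ms l j)" if j: "j < N * Z" for k l j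
  proof -
    let ?p = "pi_shift Z (int (l * S))"
    have "?T (k + l) = ?p ` ?T k" using layer_add[OF Z, of S T0 l k] by (simp add: add.commute)
    then have "{i \<in> ?T (k + l). H i j} = ?p ` {i \<in> ?T k. H (?p i) j}" by (simp only: img_filter)
    also have "\<dots> = ?p ` {i \<in> ?T k. H i (ms l j)}"
    proof -
      have "H (?p i) j = H i (ms l j)" if i: "i \<in> ?T k" for i
      proof -
        have iU: "?p i < M * Z" using ps_lt layer_sub[OF T0] i by blast
        have "H (ms l (?p i)) (ms l j) = H (?p i) j"
          unfolding ms_def by (rule circ_int[OF Z bc iU j])
        then show ?thesis unfolding ms_def ps_inv[OF Z] by simp
      qed
      then have "{i \<in> ?T k. H (?p i) j} = {i \<in> ?T k. H i (ms l j)}" by (rule filter_cong2)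
      then show ?thesis by simp
    qed
    finally show ?thesis unfolding f_def
      by (simp add: card_image inj_on_subset[OF ps_inj[OF Z]])
  qed
  have per: "f (l + L) j = f l j" for l j
    unfolding f_def using layer_period[OF Z L fe] by simp
  have wsum: "(\<Sum>l<L. f l j) = card {i \<in> ?U. H i j}" for j
  proof -
    have "{i \<in> ?U. H i j} = (\<Union>l<L. {i \<in> ?T l. H i j})" using cov by blast
    moreover have "card (\<Union>l<L. {i \<in> ?T l. H i j}) = (\<Sum>l<L. f l j)"
      unfolding f_def
      proof (rule card_UN_disjoint)
        show "finite {..<L}" by simp
        show "\<forall>l\<in>{..<L}. finite {i \<in> ?T l. H i j}"
        proof
          fix l
          have "{i \<in> ?T l. H i j} \<subseteq> ?U" using layer_sub[OF T0, of S l] by blast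
          then show "finite {i \<in> ?T l. H i j}" by (rule finite_subset) simp
        qed
        show "\<forall>l\<in>{..<L}. \<forall>l'\<in>{..<L}. l \<noteq> l' \<longrightarrow> {i \<in> ?T l. H i j} \<inter> {i \<in> ?T l'. H i j} = {}"
        proof (intro ballI impI)
          fix l l' assume "l \<in> {..<L}" "l' \<in> {..<L}" "l \<noteq> l'"
          then have "?T l \<inter> ?T l' = {}" using dis[of l l'] by simp
          then show "{i \<in> ?T l. H i j} \<inter> {i \<in> ?T l'. H i j} = {}" by blast
        qed
      qed
    ultimately show ?thesis by simp
  qed
  define W where "W = {card {i \<in> ?U. H i j} | j. j < N * Z}"
  have finW: "finite ({0} \<union> W)" unfolding W_def by simp
  define w where "w = omega N Z H ?U"
  have wdef: "w = Max ({0} \<union> W)" unfolding w_def omega_def W_def by simp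
  have MZ: "0 < M * Z" using \<open>M > 0\<close> Z by simp
  obtain j1 where j1: "j1 < N * Z" "H 0 j1"
    using \<open>no_zero_row M N Z H\<close> MZ unfolding no_zero_row_def by blast
  have "card {i \<in> ?U. H i j1} \<ge> 1"
  proof -
    have "0 \<in> {i \<in> ?U. H i j1}" using j1 \<open>M > 0\<close> Z by simp
    then have ne: "{i \<in> ?U. H i j1} \<noteq> {}" by blast
    have fin: "finite {i \<in> ?U. H i j1}" by simp
    have "card {i \<in> ?U. H i j1} > 0" using ne fin card_gt_0_iff by blast
    then show ?thesis by simp
  qed
  moreover have "card {i \<in> ?U. H i j1} \<le> w" unfolding wdef
    by (rule Max_ge[OF finW]) (use j1 in \<open>auto simp: W_def\<close>)
  ultimately have wpos: "w > 0" by simp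
  have "w \<in> {0} \<union> W" unfolding wdef by (rule Max_in[OF finW]) simp
  then obtain j0 where j0: "j0 < N * Z" "w = card {i \<in> ?U. H i j0}"
    using wpos unfolding W_def by auto
  define d where "d = layer_distance N Z L H S T0"
  have "d < L \<and> stack_weight N Z H S T0 d \<le> 1"
    unfolding d_def layer_distance_def
  proof (rule GreatestI_nat[where k = 0 and b = L])
    show "0 < L \<and> stack_weight N Z H S T0 0 \<le> 1" using L
      unfolding stack_weight_def by (simp add: Max_insert2 )
    show "y \<le> L" if "y < L \<and> stack_weight N Z H S T0 y \<le> 1" for y using that by simp
  qed
  then have sw: "stack_weight N Z H S T0 d \<le> 1" by simp
  have col: "(\<Sum>k<d. f k j) \<le> 1" if j: "j < N * Z" for j
  proof -
    have "(\<Sum>k<d. f k j) \<le> stack_weight N Z H S T0 d"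
      unfolding stack_weight_def f_def by (rule Max_ge) (use j in auto)
    then show ?thesis using sw by simp
  qed
  have "(\<Sum>l<L. \<Sum>k<d. f (k + l) j0) \<le> (\<Sum>l<L. 1)"
  proof (rule sum_mono)
    fix l assume "l \<in> {..<L}"
    have "(\<Sum>k<d. f (k + l) j0) = (\<Sum>k<d. f k (ms l j0))" using shift[OF j0(1)] by simp
    also have "\<dots> \<le> 1" by (rule col) (unfold ms_def, rule ps_lt[OF j0(1)])
    finally show "(\<Sum>k<d. f (k + l) j0) \<le> 1" .
  qed
  moreover have "(\<Sum>l<L. \<Sum>k<d. f (k + l) j0) = (\<Sum>k<d. \<Sum>l<L. f (k + l) j0)"
    by (rule sum.swap)
  moreover have "(\<Sum>l<L. f (k + l) j0) = w" for k
    using periodic_sum[of "\<lambda>l. f l j0" L k] per wsum j0 by simp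
  ultimately have "d * w \<le> L" by simp
  then show ?thesis using wpos unfolding d_def w_def by (simp add: less_eq_div_iff_mult_less_eq)
qed

end
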